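(* Let $(X,\mathcal{E})$ be an unbounded discrete ballean. The following conditions are equivalent: (1) $(X,\mathcal{E})$ is ultradiscrete; (2) $(X,\mathcal{E})$ is extremely normal; (3) $(X,\mathcal{E})$ is ultranormal; (4) $(X,\mathcal{E})$ is maximal and irresolvable.
   Context: A ballean $(X,\mathcal{E})$ is a set with a coarse structure (a family of subsets of $X\times X$ each containing the diagonal, closed under composition, inverses, and taking subsets containing the diagonal, and covering every pair of points). $E[x]=\{y:(x,y)\in E\}$, $E[A]=\bigcup_{a\in A}E[a]$. $Y$ is bounded if $Y\subseteq E[x]$ for some $x$ and $E\in\mathcal{E}$; $\mathcal{B}_X$ denotes the family of bounded sets. $A$ is large if $X=E[A]$ for some $E\in\mathcal{E}$. Subsets $Y,Z$ are asymptotically disjoint if $E[Y]\cap E[Z]$ is bounded for every $E\in\mathcal{E}$. An unbounded ballean is ultranormal if no two unbounded subsets are asymptotically disjoint; extremely normal if every unbounded subset is large; maximal if $X$ is bounded with respect to every coarse structure strictly containing $\mathcal{E}$; irresolvable if $X$ cannot be partitioned into two large subsets. The ballean is discrete if for every $E\in\mathcal{E}$ there is a bounded $B$ with $E[x]=\{x\}$ for all $x\in X\setminus B$. An unbounded discrete ballean is ultradiscrete if $\{X\setminus B: B\in\mathcal{B}_X\}$ is an ultrafilter on $X$. *)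

theory Defs
  imports Main
begin

definition coarse_structure :: "'a set \<Rightarrow> ('a \<times> 'a) set set \<Rightarrow> bool" where
  "coarse_structure X Es \<longleftrightarrow>
     (\<forall>E\<in>Es. Id_on X \<subseteq> E \<and> E \<subseteq> X \<times> X) \<and>
     (\<forall>E\<in>Es. \<forall>F\<in>Es. E O F \<in> Es) \<and>
     (\<forall>E\<in>Es. E\<inverse> \<in> Es) \<and>
     (\<forall>E\<in>Es. \<forall>F. Id_on X \<subseteq> F \<and> F \<subseteq> E \<longrightarrow> F \<in> Es) \<and>
     \<Union>Es = X \<times> X"

definition bounded_in :: "'a set \<Rightarrow> ('a \<times> 'a) set set \<Rightarrow> 'a set \<Rightarrow> bool" where
  "bounded_in X Es Y \<longleftrightarrow> (\<exists>x\<in>X. \<exists>E\<in>Es. Y \<subseteq> E `` {x})"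

definition large_in :: "'a set \<Rightarrow> ('a \<times> 'a) set set \<Rightarrow> 'a set \<Rightarrow> bool" where
  "large_in X Es A \<longleftrightarrow> A \<subseteq> X \<and> (\<exists>E\<in>Es. X = E `` A)"

definition asymp_disjoint :: "'a set \<Rightarrow> ('a \<times> 'a) set set \<Rightarrow> 'a set \<Rightarrow> 'a set \<Rightarrow> bool" where
  "asymp_disjoint X Es Y Z \<longleftrightarrow> (\<forall>E\<in>Es. bounded_in X Es (E `` Y \<inter> E `` Z))"

definition unbounded_ballean :: "'a set \<Rightarrow> ('a \<times> 'a) set set \<Rightarrow> bool" where
  "unbounded_ballean X Es \<longleftrightarrow> \<not> bounded_in X Es X"

definition ultranormal :: "'a set \<Rightarrow> ('a \<times> 'a) set set \<Rightarrow> bool" where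
  "ultranormal X Es \<longleftrightarrow> unbounded_ballean X Es \<and>
     (\<forall>Y Z. Y \<subseteq> X \<and> Z \<subseteq> X \<and> \<not> bounded_in X Es Y \<and> \<not> bounded_in X Es Z
        \<longrightarrow> \<not> asymp_disjoint X Es Y Z)"

definition extremely_normal :: "'a set \<Rightarrow> ('a \<times> 'a) set set \<Rightarrow> bool" where
  "extremely_normal X Es \<longleftrightarrow> unbounded_ballean X Es \<and>
     (\<forall>Y. Y \<subseteq> X \<and> \<not> bounded_in X Es Y \<longrightarrow> large_in X Es Y)"

definition maximal_ballean :: "'a set \<Rightarrow> ('a \<times> 'a) set set \<Rightarrow> bool" where
  "maximal_ballean X Es \<longleftrightarrow>
     (\<forall>Es'. coarse_structure X Es' \<and> Es \<subset> Es' \<longrightarrow> bounded_in X Es' X)"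

definition irresolvable :: "'a set \<Rightarrow> ('a \<times> 'a) set set \<Rightarrow> bool" where
  "irresolvable X Es \<longleftrightarrow>
     \<not> (\<exists>A B. A \<inter> B = {} \<and> A \<union> B = X \<and> large_in X Es A \<and> large_in X Es B)"

definition discrete_ballean :: "'a set \<Rightarrow> ('a \<times> 'a) set set \<Rightarrow> bool" where
  "discrete_ballean X Es \<longleftrightarrow>
     (\<forall>E\<in>Es. \<exists>B. bounded_in X Es B \<and> (\<forall>x\<in>X - B. E `` {x} = {x}))"

definition ultrafilter_on :: "'a set \<Rightarrow> 'a set set \<Rightarrow> bool" where
  "ultrafilter_on X F \<longleftrightarrow>
     F \<subseteq> Pow X \<and> X \<in> F \<and> {} \<notin> F \<and>
     (\<forall>A\<in>F. \<forall>B\<in>F. A \<inter> B \<in> F) \<and>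
     (\<forall>A\<in>F. \<forall>B. A \<subseteq> B \<and> B \<subseteq> X \<longrightarrow> B \<in> F) \<and>
     (\<forall>A. A \<subseteq> X \<longrightarrow> A \<in> F \<or> X - A \<in> F)"

definition ultradiscrete :: "'a set \<Rightarrow> ('a \<times> 'a) set set \<Rightarrow> bool" where
  "ultradiscrete X Es \<longleftrightarrow> unbounded_ballean X Es \<and> discrete_ballean X Es \<and>
     ultrafilter_on X {X - B | B. bounded_in X Es B}"

end

theory Submission
  imports Defs
begin

lemma cs_ent: assumes "coarse_structure X Es" "E \<in> Es"
  shows "Id_on X \<subseteq> E" "E \<subseteq> X \<times> X"
  using assms unfolding coarse_structure_def by auto

lemma cs_comp: assumes "coarse_structure X Es" "E \<in> Es" "F \<in> Es" shows "E O F \<in> Es"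
proof -
  have "\<forall>E\<in>Es. \<forall>F\<in>Es. E O F \<in> Es" using assms(1) unfolding coarse_structure_def
    by (elim conjE) assumption
  then show ?thesis using assms(2,3) by blast
qed

lemma cs_conv: assumes "coarse_structure X Es" "E \<in> Es" shows "E\<inverse> \<in> Es"
  using assms unfolding coarse_structure_def by blast

lemma cs_sub: assumes "coarse_structure X Es" "E \<in> Es" "Id_on X \<subseteq> F" "F \<subseteq> E"
  shows "F \<in> Es"
  using assms unfolding coarse_structure_def by blast

lemma cs_cover: assumes "coarse_structure X Es" "a \<in> X" "b \<in> X" shows "\<exists>E\<in>Es. (a,b) \<in> E"
proof -
  have "\<Union>Es = X \<times> X" using assms(1) unfolding coarse_structure_def by blast
  then show ?thesis using assms(2,3) by blast
qed

lemma bounded_subset: "bounded_in X Es Y \<Longrightarrow> Z \<subseteq> Y \<Longrightarrow> bounded_in X Es Z"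
  unfolding bounded_in_def by blast

lemma bounded_subX: assumes "coarse_structure X Es" "bounded_in X Es Y" shows "Y \<subseteq> X"
  using assms cs_ent(2)[OF assms(1)] unfolding bounded_in_def by blast

lemma bounded_single: assumes "coarse_structure X Es" "x \<in> X" shows "bounded_in X Es {x}"
proof -
  obtain E where "E \<in> Es" "(x,x) \<in> E" using cs_cover[OF assms(1) assms(2) assms(2)] by blast
  then show ?thesis using assms(2) unfolding bounded_in_def by blast
qed

lemma bounded_empty: assumes "coarse_structure X Es" "X \<noteq> {}" shows "bounded_in X Es {}"
  using bounded_single[OF assms(1)] assms(2) bounded_subset by blast

lemma ent_Un: assumes "coarse_structure X Es" "E \<in> Es" "F \<in> Es"
  shows "E \<subseteq> E O F" "F \<subseteq> E O F"
proof -
  show "E \<subseteq> E O F"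
  proof
    fix p assume p: "p \<in> E"
    obtain a b where ab: "p = (a,b)" by (cases p)
    have "b \<in> X" using p ab cs_ent(2)[OF assms(1,2)] by blast
    hence "(b,b) \<in> F" using cs_ent(1)[OF assms(1,3)] by blast
    then show "p \<in> E O F" using p ab by blast
  qed
  show "F \<subseteq> E O F"
  proof
    fix p assume p: "p \<in> F"
    obtain a b where ab: "p = (a,b)" by (cases p)
    have "a \<in> X" using p ab cs_ent(2)[OF assms(1,3)] by blast
    hence "(a,a) \<in> E" using cs_ent(1)[OF assms(1,2)] by blast
    then show "p \<in> E O F" using p ab by blast
  qed
qed

lemma bounded_Un: assumes cs: "coarse_structure X Es" and A: "bounded_in X Es A"
  and B: "bounded_in X Es B" shows "bounded_in X Es (A \<union> B)"
proof -
  obtain x E where x: "x \<in> X" "E \<in> Es" "A \<subseteq> E `` {x}" using A unfolding bounded_in_def by blast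
  obtain y F where y: "y \<in> X" "F \<in> Es" "B \<subseteq> F `` {y}" using B unfolding bounded_in_def by blast
  obtain H where H: "H \<in> Es" "(x,y) \<in> H" using cs_cover[OF cs x(1) y(1)] by blast
  have HF: "H O F \<in> Es" using cs_comp[OF cs H(1) y(2)] .
  have K: "E O (H O F) \<in> Es" using cs_comp[OF cs x(2) HF] .
  have A1: "A \<subseteq> (E O (H O F)) `` {x}"
  proof
    fix a assume "a \<in> A"
    hence "(x,a) \<in> E" using x(3) by blast
    thus "a \<in> (E O (H O F)) `` {x}" using ent_Un(1)[OF cs x(2) HF] by blast
  qed
  have B1: "B \<subseteq> (E O (H O F)) `` {x}"
  proof
    fix b assume "b \<in> B"
    hence "(y,b) \<in> F" using y(3) by blast
    hence "(x,b) \<in> H O F" using H(2) by blast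
    thus "b \<in> (E O (H O F)) `` {x}" using ent_Un(2)[OF cs x(2) HF] by blast
  qed
  have "A \<union> B \<subseteq> (E O (H O F)) `` {x}" using A1 B1 by (rule Un_least)
  then show ?thesis using x(1) K unfolding bounded_in_def by blast
qed

lemma bounded_image: assumes cs: "coarse_structure X Es" and A: "bounded_in X Es A"
  and E: "E \<in> Es" shows "bounded_in X Es (E `` A)"
proof -
  obtain x F where x: "x \<in> X" "F \<in> Es" "A \<subseteq> F `` {x}" using A unfolding bounded_in_def by blast
  have "E `` A \<subseteq> (F O E) `` {x}" using x(3) by blast
  then show ?thesis using x(1) cs_comp[OF cs x(2) E] unfolding bounded_in_def by blast
qed

lemma box_in: assumes cs: "coarse_structure X Es" and C: "bounded_in X Es C"
  shows "Id_on X \<union> C \<times> C \<in> Es"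
proof -
  obtain x F where x: "x \<in> X" "F \<in> Es" "C \<subseteq> F `` {x}" using C unfolding bounded_in_def by blast
  have G: "F\<inverse> O F \<in> Es" using cs_comp[OF cs cs_conv[OF cs x(2)] x(2)] .
  have "Id_on X \<subseteq> F" using cs_ent(1)[OF cs x(2)] .
  hence "Id_on X \<union> C \<times> C \<subseteq> F\<inverse> O F" using x(3) by blast
  moreover have "Id_on X \<subseteq> Id_on X \<union> C \<times> C" by blast
  ultimately show ?thesis using cs_sub[OF cs G] by blast
qed

lemma ent_box: assumes cs: "coarse_structure X Es" and d: "discrete_ballean X Es"
  and E: "E \<in> Es" shows "\<exists>C. bounded_in X Es C \<and> E \<subseteq> Id_on X \<union> C \<times> C"
proof -
  obtain B where B: "bounded_in X Es B" "\<forall>x\<in>X - B. E `` {x} = {x}"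
    using d E unfolding discrete_ballean_def by blast
  let ?C = "B \<union> E `` B"
  have "bounded_in X Es ?C" using bounded_Un[OF cs B(1) bounded_image[OF cs B(1) E]] .
  moreover have "E \<subseteq> Id_on X \<union> ?C \<times> ?C"
  proof
    fix p assume p: "p \<in> E"
    obtain a b where ab: "p = (a,b)" by (cases p)
    have aX: "a \<in> X" using p ab cs_ent(2)[OF cs E] by blast
    show "p \<in> Id_on X \<union> ?C \<times> ?C"
    proof (cases "a \<in> B")
      case True then show ?thesis using p ab by blast
    next
      case False
      hence "E `` {a} = {a}" using B(2) aX by blast
      hence "b = a" using p ab by blast
      then show ?thesis using ab aX by blast
    qed
  qed
  ultimately show ?thesis by blast
qed

lemma large_cobounded: assumes cs: "coarse_structure X Es" and d: "discrete_ballean X Es"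
  and L: "large_in X Es A" shows "bounded_in X Es (X - A)"
proof -
  obtain E where E: "E \<in> Es" "X = E `` A" "A \<subseteq> X" using L unfolding large_in_def by blast
  obtain B where B: "bounded_in X Es B" "\<forall>x\<in>X - B. E `` {x} = {x}"
    using d E unfolding discrete_ballean_def by blast
  have "X - A \<subseteq> E `` B"
  proof
    fix y assume y: "y \<in> X - A"
    then obtain a where a: "a \<in> A" "(a,y) \<in> E" using E(2) by blast
    show "y \<in> E `` B"
    proof (cases "a \<in> B")
      case True then show ?thesis using a by blast
    next
      case False
      hence "E `` {a} = {a}" using B(2) a(1) E(3) by blast
      hence "y = a" using a by blast
      then show ?thesis using y a by blast
    qed
  qed
  then show ?thesis using bounded_subset bounded_image[OF cs B(1) E(1)] by blast
qed

lemma cobounded_large: assumes cs: "coarse_structure X Es" and b: "bounded_in X Es (X - Y)"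
  and Y: "Y \<subseteq> X" and y0: "y0 \<in> Y" shows "large_in X Es Y"
proof -
  let ?C = "(X - Y) \<union> {y0}"
  have bC: "bounded_in X Es ?C" using bounded_Un[OF cs b bounded_single[OF cs]] Y y0 by blast
  have E: "Id_on X \<union> ?C \<times> ?C \<in> Es" using box_in[OF cs bC] .
  have "(Id_on X \<union> ?C \<times> ?C) `` Y = X"
  proof
    show "(Id_on X \<union> ?C \<times> ?C) `` Y \<subseteq> X" using Y y0 by blast
    show "X \<subseteq> (Id_on X \<union> ?C \<times> ?C) `` Y"
    proof
      fix x assume x: "x \<in> X"
      show "x \<in> (Id_on X \<union> ?C \<times> ?C) `` Y"
      proof (cases "x \<in> Y")
        case True then show ?thesis using x by blast
      next
        case False then show ?thesis using x y0 by blast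
      qed
    qed
  qed
  then show ?thesis using E Y unfolding large_in_def by blast
qed


lemma EN_UD: assumes cs: "coarse_structure X Es" and u: "unbounded_ballean X Es"
  and d: "discrete_ballean X Es" and ne: "X \<noteq> {}" and en: "extremely_normal X Es"
  shows "ultradiscrete X Es"
proof -
  let ?F = "{X - B | B. bounded_in X Es B}"
  have nb: "\<not> bounded_in X Es X" using u unfolding unbounded_ballean_def by blast
  have "ultrafilter_on X ?F"
    unfolding ultrafilter_on_def
  proof (intro conjI ballI allI impI)
    show "?F \<subseteq> Pow X" by blast
    show "X \<in> ?F" using bounded_empty[OF cs ne] by force
    show "{} \<notin> ?F"
    proof
      assume "{} \<in> ?F"
      then obtain B where "bounded_in X Es B" "X - B = {}" by blast
      then show False using nb bounded_subset by blast
    qed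
  next
    fix A B assume "A \<in> ?F" "B \<in> ?F"
    then obtain A' B' where "bounded_in X Es A'" "A = X - A'" "bounded_in X Es B'" "B = X - B'" by blast
    then have "A \<inter> B = X - (A' \<union> B')" "bounded_in X Es (A' \<union> B')" using bounded_Un[OF cs] by blast+
    then show "A \<inter> B \<in> ?F" by blast
  next
    fix A B assume "A \<in> ?F" "A \<subseteq> B \<and> B \<subseteq> X"
    then obtain A' where A': "bounded_in X Es A'" "A = X - A'" "A \<subseteq> B" "B \<subseteq> X" by blast
    then have "B = X - (X - B)" "bounded_in X Es (X - B)" using bounded_subset by blast+
    then show "B \<in> ?F" by blast
  next
    fix A assume A: "A \<subseteq> X"
    show "A \<in> ?F \<or> X - A \<in> ?F"
    proof (cases "bounded_in X Es A")
      case True then show ?thesis by blast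
    next
      case False
      then have "large_in X Es A" using en A unfolding extremely_normal_def by blast
      then have "bounded_in X Es (X - A)" using large_cobounded[OF cs d] by blast
      moreover have "A = X - (X - A)" using A by blast
      ultimately show ?thesis by blast
    qed
  qed
  then show ?thesis using u d unfolding ultradiscrete_def by blast
qed

lemma UD_EN: assumes cs: "coarse_structure X Es" and ne: "X \<noteq> {}" and ud: "ultradiscrete X Es"
  shows "extremely_normal X Es"
proof -
  have u: "unbounded_ballean X Es" using ud unfolding ultradiscrete_def by blast
  have uf: "ultrafilter_on X {X - B | B. bounded_in X Es B}" using ud unfolding ultradiscrete_def by blast
  have "large_in X Es Y" if Y: "Y \<subseteq> X" "\<not> bounded_in X Es Y" for Y
  proof -
    have "Y \<in> {X - B | B. bounded_in X Es B} \<or> X - Y \<in> {X - B | B. bounded_in X Es B}"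
      using uf Y(1) unfolding ultrafilter_on_def by blast
    moreover have "X - Y \<notin> {X - B | B. bounded_in X Es B}"
    proof
      assume "X - Y \<in> {X - B | B. bounded_in X Es B}"
      then obtain B where B: "bounded_in X Es B" "X - Y = X - B" by blast
      have "B \<subseteq> X" using bounded_subX[OF cs B(1)] .
      then have "Y = B" using B(2) Y(1) by blast
      then show False using Y B by blast
    qed
    ultimately obtain B where B: "bounded_in X Es B" "Y = X - B" by blast
    have "B \<subseteq> X" using bounded_subX[OF cs B(1)] .
    then have bX: "bounded_in X Es (X - Y)" using B by (simp add: Diff_Diff_Int inf.absorb2)
    have "Y \<noteq> {}" using Y(2) bounded_empty[OF cs ne] by blast
    then obtain y0 where "y0 \<in> Y" by blast
    then show ?thesis using cobounded_large[OF cs bX Y(1)] by blast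
  qed
  then show ?thesis using u unfolding extremely_normal_def by blast
qed

lemma EN_UN: assumes cs: "coarse_structure X Es" and en: "extremely_normal X Es"
  shows "ultranormal X Es"
proof -
  have "\<not> asymp_disjoint X Es Y Z"
    if Y: "Y \<subseteq> X" "\<not> bounded_in X Es Y" and Z: "Z \<subseteq> X" "\<not> bounded_in X Es Z" for Y Z
  proof
    assume ad: "asymp_disjoint X Es Y Z"
    obtain E where E: "E \<in> Es" "X = E `` Y" using en Y unfolding extremely_normal_def large_in_def by blast
    have "bounded_in X Es (E `` Y \<inter> E `` Z)" using ad E(1) unfolding asymp_disjoint_def by blast
    moreover have "Z \<subseteq> E `` Z" using cs_ent(1)[OF cs E(1)] Z(1) by blast
    then have "Z \<subseteq> E `` Y \<inter> E `` Z" using E(2) Z(1) by blast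
    ultimately show False using Z(2) bounded_subset by blast
  qed
  then show ?thesis using en unfolding ultranormal_def extremely_normal_def by blast
qed

lemma UN_EN: assumes cs: "coarse_structure X Es" and d: "discrete_ballean X Es"
  and ne: "X \<noteq> {}" and un: "ultranormal X Es"
  shows "extremely_normal X Es"
proof -
  have "large_in X Es Y" if Y: "Y \<subseteq> X" "\<not> bounded_in X Es Y" for Y
  proof -
    have bX: "bounded_in X Es (X - Y)"
    proof (rule ccontr)
      assume nb: "\<not> bounded_in X Es (X - Y)"
      have "asymp_disjoint X Es Y (X - Y)"
        unfolding asymp_disjoint_def
      proof
        fix E assume E: "E \<in> Es"
        obtain C where C: "bounded_in X Es C" "E \<subseteq> Id_on X \<union> C \<times> C" using ent_box[OF cs d E] by blast
        have "E `` Y \<inter> E `` (X - Y) \<subseteq> C"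
        proof
          fix z assume z: "z \<in> E `` Y \<inter> E `` (X - Y)"
          then obtain y w where yw: "y \<in> Y" "(y,z) \<in> E" "w \<in> X - Y" "(w,z) \<in> E" by blast
          show "z \<in> C" using yw C(2) by blast
        qed
        then show "bounded_in X Es (E `` Y \<inter> E `` (X - Y))" using C(1) bounded_subset by blast
      qed
      then show False using un Y nb unfolding ultranormal_def by blast
    qed
    have "Y \<noteq> {}" using Y(2) bounded_empty[OF cs ne] by blast
    then obtain y0 where "y0 \<in> Y" by blast
    then show ?thesis using cobounded_large[OF cs bX Y(1)] by blast
  qed
  then show ?thesis using un unfolding extremely_normal_def ultranormal_def by blast
qed

lemma EN_irr: assumes cs: "coarse_structure X Es" and d: "discrete_ballean X Es"
  and en: "extremely_normal X Es" shows "irresolvable X Es"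
  unfolding irresolvable_def
proof
  assume "\<exists>A B. A \<inter> B = {} \<and> A \<union> B = X \<and> large_in X Es A \<and> large_in X Es B"
  then obtain A B where AB: "A \<inter> B = {}" "A \<union> B = X" "large_in X Es A" "large_in X Es B" by blast
  have "bounded_in X Es ((X - A) \<union> (X - B))"
    using bounded_Un[OF cs large_cobounded[OF cs d AB(3)] large_cobounded[OF cs d AB(4)]] .
  moreover have "(X - A) \<union> (X - B) = X" using AB(1) by blast
  ultimately show False using en unfolding extremely_normal_def unbounded_ballean_def by simp
qed


lemma max_indep:
  assumes sym: "\<And>x y. (x,y) \<in> G \<Longrightarrow> (y,x) \<in> G"
  shows "\<exists>I. I \<subseteq> D \<and> (\<forall>x\<in>I. \<forall>y\<in>I. (x,y) \<in> G \<longrightarrow> x = y)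
             \<and> (\<forall>x\<in>D - I. \<exists>y\<in>I. (y,x) \<in> G \<and> y \<noteq> x)"
proof -
  define P where "P = (\<lambda>I. I \<subseteq> D \<and> (\<forall>x\<in>I. \<forall>y\<in>I. (x,y) \<in> G \<longrightarrow> x = y))"
  define A where "A = {I. P I}"
  have "\<forall>C\<in>chains A. \<Union>C \<in> A"
  proof
    fix C assume C: "C \<in> chains A"
    have sub: "\<And>I. I \<in> C \<Longrightarrow> P I" using C unfolding chains_def A_def by blast
    have ch: "\<And>I J. I \<in> C \<Longrightarrow> J \<in> C \<Longrightarrow> I \<subseteq> J \<or> J \<subseteq> I"
      using C unfolding chains_def chain_subset_def by blast
    have "\<Union>C \<subseteq> D"
    proof
      fix x assume "x \<in> \<Union>C"
      then obtain I where "I \<in> C" "x \<in> I" by blast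
      then show "x \<in> D" using sub[of I] unfolding P_def by blast
    qed
    moreover have "\<forall>x\<in>\<Union>C. \<forall>y\<in>\<Union>C. (x,y) \<in> G \<longrightarrow> x = y"
    proof (intro ballI impI)
      fix x y assume xy: "x \<in> \<Union>C" "y \<in> \<Union>C" "(x,y) \<in> G"
      then obtain I J where IJ: "I \<in> C" "J \<in> C" "x \<in> I" "y \<in> J" by blast
      have PI: "P I" using sub IJ(1) .
      have PJ: "P J" using sub IJ(2) .
      from ch[OF IJ(1,2)] show "x = y"
      proof
        assume "I \<subseteq> J"
        then have "x \<in> J" using IJ(3) by blast
        then show "x = y" using PJ IJ(4) xy(3) unfolding P_def by blast
      next
        assume "J \<subseteq> I"
        then have "y \<in> I" using IJ(4) by blast
        then show "x = y" using PI IJ(3) xy(3) unfolding P_def by blast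
      qed
    qed
    ultimately show "\<Union>C \<in> A" unfolding A_def P_def by blast
  qed
  from Zorn_Lemma[OF this] obtain M where M: "M \<in> A" "\<And>J. J \<in> A \<Longrightarrow> M \<subseteq> J \<Longrightarrow> J = M"
    by blast
  have PM: "M \<subseteq> D" "\<And>x y. x \<in> M \<Longrightarrow> y \<in> M \<Longrightarrow> (x,y) \<in> G \<Longrightarrow> x = y"
    using M(1) unfolding A_def P_def by blast+
  have "\<forall>x\<in>D - M. \<exists>y\<in>M. (y,x) \<in> G \<and> y \<noteq> x"
  proof
    fix x assume x: "x \<in> D - M"
    show "\<exists>y\<in>M. (y,x) \<in> G \<and> y \<noteq> x"
    proof (rule ccontr)
      assume no: "\<not> (\<exists>y\<in>M. (y,x) \<in> G \<and> y \<noteq> x)"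
      have "P (insert x M)"
        unfolding P_def
      proof
        show "insert x M \<subseteq> D" using x PM(1) by blast
        show "\<forall>a\<in>insert x M. \<forall>b\<in>insert x M. (a,b) \<in> G \<longrightarrow> a = b"
        proof (intro ballI impI)
          fix a b assume ab: "a \<in> insert x M" "b \<in> insert x M" "(a,b) \<in> G"
          show "a = b"
          proof (cases "a = x")
            case True
            show ?thesis
            proof (cases "b = x")
              case True then show ?thesis using \<open>a = x\<close> by simp
            next
              case False
              then have "b \<in> M" using ab(2) by blast
              moreover have "(b,x) \<in> G" using sym[OF ab(3)] True by simp
              ultimately show ?thesis using no False by blast
            qed
          next
            case False
            then have aM: "a \<in> M" using ab(1) by blast
            show ?thesis
            proof (cases "b = x")
              case True
              then show ?thesis using no aM ab(3) by blast
            next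
              case False
              then have "b \<in> M" using ab(2) by blast
              then show ?thesis using PM(2) aM ab(3) by blast
            qed
          qed
        qed
      qed
      then have "insert x M \<in> A" unfolding A_def by simp
      then have "insert x M = M" using M(2) by blast
      then show False using x by blast
    qed
  qed
  then show ?thesis using PM by blast
qed

lemma EN_max: assumes cs: "coarse_structure X Es" and d: "discrete_ballean X Es"
  and en: "extremely_normal X Es" shows "maximal_ballean X Es"
  unfolding maximal_ballean_def
proof (intro allI impI)
  fix Es' assume a: "coarse_structure X Es' \<and> Es \<subset> Es'"
  have cs': "coarse_structure X Es'" using a by blast
  have sub: "Es \<subseteq> Es'" using a by blast
  obtain F where F: "F \<in> Es'" "F \<notin> Es" using a by blast
  show "bounded_in X Es' X"
  proof (rule ccontr)
    assume nb: "\<not> bounded_in X Es' X"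
    have ultra: "bounded_in X Es S \<or> bounded_in X Es (X - S)" if "S \<subseteq> X" for S
    proof (cases "bounded_in X Es S")
      case False
      then have "large_in X Es S" using en that unfolding extremely_normal_def by blast
      then show ?thesis using large_cobounded[OF cs d] by blast
    qed simp
    have up: "bounded_in X Es' S" if "bounded_in X Es S" for S
      using that sub unfolding bounded_in_def by blast
    have down: "bounded_in X Es S" if S: "bounded_in X Es' S" for S
    proof (rule ccontr)
      assume "\<not> bounded_in X Es S"
      moreover have SX: "S \<subseteq> X" using bounded_subX[OF cs' S] .
      ultimately have "bounded_in X Es (X - S)" using ultra by blast
      then have "bounded_in X Es' (S \<union> (X - S))" using bounded_Un[OF cs' S up] by blast
      moreover have "S \<union> (X - S) = X" using SX by blast
      ultimately show False using nb by simp
    qed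
    have Fc: "F\<inverse> \<in> Es'" using cs_conv[OF cs' F(1)] .
    define G where "G = F O F\<inverse>"
    have G: "G \<in> Es'" unfolding G_def using cs_comp[OF cs' F(1) Fc] .
    have Gsym: "(b,a) \<in> G" if "(a,b) \<in> G" for a b using that unfolding G_def by blast
    have FG: "F \<subseteq> G" unfolding G_def using ent_Un(1)[OF cs' F(1) Fc] .
    have IdF: "Id_on X \<subseteq> F" using cs_ent(1)[OF cs' F(1)] .
    have GX: "G \<subseteq> X \<times> X" using cs_ent(2)[OF cs' G] .
    define D where "D = {x \<in> X. \<exists>y. (x,y) \<in> G \<and> y \<noteq> x}"
    show False
    proof (cases "bounded_in X Es D")
      case True
      have "bounded_in X Es (G `` D)" using down bounded_image[OF cs' up[OF True] G] by blast
      then have bC: "bounded_in X Es (D \<union> G `` D)" using bounded_Un[OF cs True] by blast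
      have "G \<subseteq> Id_on X \<union> (D \<union> G `` D) \<times> (D \<union> G `` D)"
      proof
        fix p assume p: "p \<in> G"
        obtain a b where ab: "p = (a,b)" by (cases p)
        have aX: "a \<in> X" using p ab GX by blast
        show "p \<in> Id_on X \<union> (D \<union> G `` D) \<times> (D \<union> G `` D)"
        proof (cases "b = a")
          case True then show ?thesis using ab aX by blast
        next
          case False
          then have "a \<in> D" using aX p ab unfolding D_def by blast
          then show ?thesis using p ab by blast
        qed
      qed
      then have "F \<in> Es" using cs_sub[OF cs box_in[OF cs bC] IdF] FG by blast
      then show False using F(2) by blast
    next
      case False
      obtain I where I: "I \<subseteq> D" "\<forall>x\<in>I. \<forall>y\<in>I. (x,y) \<in> G \<longrightarrow> x = y"
        "\<forall>x\<in>D - I. \<exists>y\<in>I. (y,x) \<in> G \<and> y \<noteq> x"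
        using max_indep[of G D] Gsym by blast
      have DX: "D \<subseteq> X" unfolding D_def by blast
      have n1: "D - I \<subseteq> G `` I" using I(3) by blast
      have n2: "I \<subseteq> G `` (D - I)"
      proof
        fix x assume x: "x \<in> I"
        then have "x \<in> D" using I(1) by blast
        then obtain y where y: "(x,y) \<in> G" "y \<noteq> x" unfolding D_def by blast
        have yx: "(y,x) \<in> G" using Gsym y(1) .
        have "y \<in> X" using y(1) GX by blast
        then have "y \<in> D" using yx y(2) unfolding D_def by auto
        moreover have "y \<notin> I" using I(2) x y by blast
        ultimately show "x \<in> G `` (D - I)" using yx by blast
      qed
      have "bounded_in X Es I \<or> bounded_in X Es (D - I)"
      proof (cases "bounded_in X Es I")
        case False
        have "I \<subseteq> X" using I(1) DX by (rule order_trans)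
        then have "bounded_in X Es (X - I)" using ultra False by blast
        then have "bounded_in X Es (D - I)" by (rule bounded_subset) (use DX in blast)
        then show ?thesis by (rule disjI2)
      qed simp
      then show False
      proof
        assume bI: "bounded_in X Es I"
        have "bounded_in X Es (G `` I)" using down bounded_image[OF cs' up[OF bI] G] by blast
        then have "bounded_in X Es (D - I)" using n1 bounded_subset by blast
        then have "bounded_in X Es (I \<union> (D - I))" using bounded_Un[OF cs bI] by blast
        moreover have "I \<union> (D - I) = D" using I(1) by blast
        ultimately show False using False by simp
      next
        assume bI: "bounded_in X Es (D - I)"
        have "bounded_in X Es (G `` (D - I))" using down bounded_image[OF cs' up[OF bI] G] by blast
        then have "bounded_in X Es I" using n2 bounded_subset by blast
        then have "bounded_in X Es (I \<union> (D - I))" using bounded_Un[OF cs _ bI] by blast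
        moreover have "I \<union> (D - I) = D" using I(1) by blast
        ultimately show False using False by simp
      qed
    qed
  qed
qed


lemma max_EN: assumes cs: "coarse_structure X Es" and u: "unbounded_ballean X Es"
  and d: "discrete_ballean X Es" and ne: "X \<noteq> {}" and m: "maximal_ballean X Es"
  shows "extremely_normal X Es"
proof -
  have "large_in X Es Y" if Y: "Y \<subseteq> X" "\<not> bounded_in X Es Y" for Y
  proof (rule ccontr)
    assume nl: "\<not> large_in X Es Y"
    have "Y \<noteq> {}" using Y(2) bounded_empty[OF cs ne] by blast
    then obtain y0 where y0: "y0 \<in> Y" by blast
    define Z where "Z = X - Y"
    have nbZ: "\<not> bounded_in X Es Z"
      using cobounded_large[OF cs _ Y(1) y0] nl unfolding Z_def by blast
    define Es' where "Es' = {F. Id_on X \<subseteq> F \<and> (\<exists>C. C \<subseteq> X \<and> bounded_in X Es (C \<inter> Z) \<and> F \<subseteq> Id_on X \<union> C \<times> C)}"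
    have memI: "F \<in> Es'" if "Id_on X \<subseteq> F" "C \<subseteq> X" "bounded_in X Es (C \<inter> Z)" "F \<subseteq> Id_on X \<union> C \<times> C" for F C
      using that unfolding Es'_def by blast
    have memE: "\<exists>C. C \<subseteq> X \<and> bounded_in X Es (C \<inter> Z) \<and> F \<subseteq> Id_on X \<union> C \<times> C" if "F \<in> Es'" for F
      using that unfolding Es'_def by blast
    have memId: "Id_on X \<subseteq> F" if "F \<in> Es'" for F
      using that unfolding Es'_def by blast
    have sub1: "F \<subseteq> X \<times> X" if FE: "F \<in> Es'" for F
    proof -
      obtain C where "C \<subseteq> X" "F \<subseteq> Id_on X \<union> C \<times> C" using memE[OF FE] by blast
      then show ?thesis by blast
    qed
    have cs': "coarse_structure X Es'"
      unfolding coarse_structure_def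
    proof (intro conjI ballI allI impI)
      fix E assume "E \<in> Es'" then show "Id_on X \<subseteq> E" "E \<subseteq> X \<times> X" using memId sub1 by blast+
    next
      fix E F assume E: "E \<in> Es'" and F: "F \<in> Es'"
      obtain C1 where C1: "C1 \<subseteq> X" "bounded_in X Es (C1 \<inter> Z)" "E \<subseteq> Id_on X \<union> C1 \<times> C1" using memE[OF E] by blast
      obtain C2 where C2: "C2 \<subseteq> X" "bounded_in X Es (C2 \<inter> Z)" "F \<subseteq> Id_on X \<union> C2 \<times> C2" using memE[OF F] by blast
      have "Id_on X \<subseteq> E O F" using memId[OF E] memId[OF F] by blast
      moreover have "(C1 \<union> C2) \<inter> Z = (C1 \<inter> Z) \<union> (C2 \<inter> Z)" by blast
      then have "bounded_in X Es ((C1 \<union> C2) \<inter> Z)" using bounded_Un[OF cs C1(2) C2(2)] by simp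
      moreover have "E O F \<subseteq> Id_on X \<union> (C1 \<union> C2) \<times> (C1 \<union> C2)"
      proof
        fix p assume "p \<in> E O F"
        then obtain a b c where abc: "p = (a,c)" "(a,b) \<in> E" "(b,c) \<in> F" by blast
        have 1: "(a,b) \<in> Id_on X \<or> (a \<in> C1 \<and> b \<in> C1)" using abc(2) C1(3) by blast
        have 2: "(b,c) \<in> Id_on X \<or> (b \<in> C2 \<and> c \<in> C2)" using abc(3) C2(3) by blast
        from 1 2 show "p \<in> Id_on X \<union> (C1 \<union> C2) \<times> (C1 \<union> C2)" using abc(1) by auto
      qed
      moreover have "C1 \<union> C2 \<subseteq> X" using C1(1) C2(1) by blast
      ultimately show "E O F \<in> Es'" using memI by blast
    next
      fix E assume E: "E \<in> Es'"
      obtain C where C: "C \<subseteq> X" "bounded_in X Es (C \<inter> Z)" "E \<subseteq> Id_on X \<union> C \<times> C" using memE[OF E] by blast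
      have "Id_on X \<subseteq> E\<inverse>" using memId[OF E] by blast
      moreover have "E\<inverse> \<subseteq> Id_on X \<union> C \<times> C" using C(3) by blast
      ultimately show "E\<inverse> \<in> Es'" using memI C(1,2) by blast
    next
      fix E F assume E: "E \<in> Es'" and F: "Id_on X \<subseteq> F \<and> F \<subseteq> E"
      obtain C where C: "C \<subseteq> X" "bounded_in X Es (C \<inter> Z)" "E \<subseteq> Id_on X \<union> C \<times> C" using memE[OF E] by blast
      have "F \<subseteq> Id_on X \<union> C \<times> C" using F C(3) by blast
      then show "F \<in> Es'" using memI[OF _ C(1,2)] F by blast
    next
      show "\<Union>Es' = X \<times> X"
      proof
        show "\<Union>Es' \<subseteq> X \<times> X" using sub1 by blast
        show "X \<times> X \<subseteq> \<Union>Es'"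
        proof
          fix p assume "p \<in> X \<times> X"
          then obtain a b where ab: "p = (a,b)" "a \<in> X" "b \<in> X" by blast
          have "bounded_in X Es ({a} \<union> {b})" using bounded_Un[OF cs bounded_single[OF cs ab(2)] bounded_single[OF cs ab(3)]] .
          then have "bounded_in X Es ({a,b} \<inter> Z)" by (rule bounded_subset) blast
          moreover have "{a,b} \<subseteq> X" using ab by blast
          moreover have "Id_on X \<subseteq> Id_on X \<union> {a,b} \<times> {a,b}" by blast
          ultimately have "Id_on X \<union> {a,b} \<times> {a,b} \<in> Es'" using memI by blast
          then show "p \<in> \<Union>Es'" using ab(1) by blast
        qed
      qed
    qed
    have sub: "Es \<subseteq> Es'"
    proof
      fix E assume E: "E \<in> Es"
      obtain C where C: "bounded_in X Es C" "E \<subseteq> Id_on X \<union> C \<times> C" using ent_box[OF cs d E] by blast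
      have "C \<subseteq> X" using bounded_subX[OF cs C(1)] .
      moreover have "bounded_in X Es (C \<inter> Z)" using C(1) bounded_subset by blast
      ultimately show "E \<in> Es'" using memI cs_ent(1)[OF cs E] C(2) by blast
    qed
    have F0: "Id_on X \<union> Y \<times> Y \<in> Es'"
    proof -
      have "Y \<inter> Z = {}" unfolding Z_def by blast
      then have "bounded_in X Es (Y \<inter> Z)" using bounded_empty[OF cs ne] by simp
      moreover have "Id_on X \<subseteq> Id_on X \<union> Y \<times> Y" by blast
      ultimately show ?thesis using memI Y(1) by blast
    qed
    have F0n: "Id_on X \<union> Y \<times> Y \<notin> Es"
    proof
      assume "Id_on X \<union> Y \<times> Y \<in> Es"
      moreover have "Y \<subseteq> (Id_on X \<union> Y \<times> Y) `` {y0}" using y0 by blast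
      ultimately have "bounded_in X Es Y" using y0 Y(1) unfolding bounded_in_def by blast
      then show False using Y(2) by blast
    qed
    have "Es \<subset> Es'" using sub F0 F0n by blast
    then have bX: "bounded_in X Es' X" using m cs' unfolding maximal_ballean_def by blast
    then obtain x F where xF: "x \<in> X" "F \<in> Es'" "X \<subseteq> F `` {x}" unfolding bounded_in_def by blast
    obtain C where C: "C \<subseteq> X" "bounded_in X Es (C \<inter> Z)" "F \<subseteq> Id_on X \<union> C \<times> C" using memE[OF xF(2)] by blast
    have "Z \<subseteq> {x} \<union> (C \<inter> Z)"
    proof
      fix z assume z: "z \<in> Z"
      then have "(x,z) \<in> F" using xF(3) unfolding Z_def by blast
      then have "(x,z) \<in> Id_on X \<union> C \<times> C" using C(3) by blast
      then show "z \<in> {x} \<union> (C \<inter> Z)" using z by blast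
    qed
    moreover have "bounded_in X Es ({x} \<union> (C \<inter> Z))" using bounded_Un[OF cs bounded_single[OF cs xF(1)] C(2)] .
    ultimately show False using nbZ bounded_subset by blast
  qed
  then show ?thesis using u unfolding extremely_normal_def by blast
qed

theorem theorem2:
  fixes X :: "'a set" and Es :: "('a \<times> 'a) set set"
  assumes "coarse_structure X Es"
    and "unbounded_ballean X Es"
    and "discrete_ballean X Es"
  shows "(ultradiscrete X Es \<longleftrightarrow> extremely_normal X Es)
       \<and> (extremely_normal X Es \<longleftrightarrow> ultranormal X Es)
       \<and> (ultranormal X Es \<longleftrightarrow> maximal_ballean X Es \<and> irresolvable X Es)"
proof (cases "X = {}")
  case True
  have Es: "Es = {}"
  proof (rule ccontr)
    assume "Es \<noteq> {}"
    then obtain E where "E \<in> Es" by blast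
    then obtain B where "bounded_in X Es B" using assms(3) unfolding discrete_ballean_def by blast
    then show False using True unfolding bounded_in_def by blast
  qed
  have nb: "\<not> bounded_in X Es S" for S using True unfolding bounded_in_def by blast
  have n1: "\<not> ultradiscrete X Es"
  proof
    assume "ultradiscrete X Es"
    then have "X \<in> {X - B | B. bounded_in X Es B}" unfolding ultradiscrete_def ultrafilter_on_def by blast
    then show False using nb by blast
  qed
  have n2: "\<not> extremely_normal X Es"
  proof
    assume "extremely_normal X Es"
    then have "large_in X Es {}" using nb True unfolding extremely_normal_def by blast
    then show False using Es unfolding large_in_def by blast
  qed
  have n3: "\<not> ultranormal X Es"
  proof
    assume "ultranormal X Es"
    moreover have "asymp_disjoint X Es {} {}" using Es unfolding asymp_disjoint_def by blast
    ultimately show False using nb unfolding ultranormal_def by blast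
  qed
  have n4: "\<not> maximal_ballean X Es"
  proof
    assume "maximal_ballean X Es"
    moreover have "coarse_structure X {{}}" using True unfolding coarse_structure_def by auto
    moreover have "Es \<subset> {{}}" using Es by blast
    ultimately have "bounded_in X {{}} X" unfolding maximal_ballean_def by blast
    then show False using True unfolding bounded_in_def by blast
  qed
  show ?thesis using n1 n2 n3 n4 by blast
next
  case False
  note cs = assms(1) and u = assms(2) and d = assms(3)
  have a: "ultradiscrete X Es \<longleftrightarrow> extremely_normal X Es"
    using EN_UD[OF cs u d False] UD_EN[OF cs False] by blast
  have b: "extremely_normal X Es \<longleftrightarrow> ultranormal X Es"
    using EN_UN[OF cs] UN_EN[OF cs d False] by blast
  have c: "ultranormal X Es \<longleftrightarrow> maximal_ballean X Es \<and> irresolvable X Es"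
    using b EN_max[OF cs d] EN_irr[OF cs d] max_EN[OF cs u d False] by blast
  show ?thesis using a b c by blast
qed

end
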